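(* Let $d,l,m\geq1$ and let $\mathcal{Q}=\{P_1,\dots,P_l\}$ be a measurement scheme of POVMs on $\mathbb{C}^d$ with outcome set $\{1,\dots,m\}$. Then $\mathcal{Q}$ determines any pure state among all states if and only if every non-zero element of $\ker M_{\mathcal{Q}}$ has at least two (counted with multiplicity) positive eigenvalues.
   Context: $H(d)$ is the real vector space of $d\times d$ complex Hermitian matrices. A POVM with outcome set $\{1,\dots,m\}$ is a map $j\mapsto P(j)\in H(d)$ with $P(j)\geq0$ and $\sum_j P(j)=\mathbb{1}$. The scheme induces the real-linear map $M_{\mathcal{Q}}:H(d)\to M_{lm}(\mathbb{R})$, $M_{\mathcal{Q}}(X)_{i,j}=\mathrm{tr}(XP_i(j))$. A state is a positive semidefinite trace-one matrix; a pure state is a rank-one state. $\mathcal{Q}$ determines any pure state among all states if for every pure state $\sigma$ and every state $\varrho$, $M_{\mathcal{Q}}(\sigma)=M_{\mathcal{Q}}(\varrho)$ implies $\varrho=\sigma$. *)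

theory Defs
  imports "Jordan_Normal_Form.Char_Poly" "Jordan_Normal_Form.DL_Rank"
begin

text \<open>Complex d x d matrices are Jordan_Normal_Form matrices of type complex mat.
  POVMs are indexed 0..<l and outcomes 0..<m (0-based reindexing of 1..l, 1..m).\<close>

definition hermitian :: "nat \<Rightarrow> complex mat \<Rightarrow> bool" where
  "hermitian d A \<longleftrightarrow> A \<in> carrier_mat d d \<and>
     (\<forall>i<d. \<forall>j<d. A $$ (i, j) = cnj (A $$ (j, i)))"

definition psd :: "nat \<Rightarrow> complex mat \<Rightarrow> bool" where
  "psd d A \<longleftrightarrow> hermitian d A \<and>
     (\<forall>v \<in> carrier_vec d. 0 \<le> Re (\<Sum>i<d. \<Sum>j<d. cnj (v $ i) * A $$ (i, j) * v $ j))"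

definition mtrace :: "complex mat \<Rightarrow> complex" where
  "mtrace A = (\<Sum>i<dim_row A. A $$ (i, i))"

definition is_state :: "nat \<Rightarrow> complex mat \<Rightarrow> bool" where
  "is_state d \<rho> \<longleftrightarrow> psd d \<rho> \<and> mtrace \<rho> = 1"

definition is_pure_state :: "nat \<Rightarrow> complex mat \<Rightarrow> bool" where
  "is_pure_state d \<sigma> \<longleftrightarrow> is_state d \<sigma> \<and> vec_space.rank d \<sigma> = 1"

definition is_povm :: "nat \<Rightarrow> nat \<Rightarrow> (nat \<Rightarrow> complex mat) \<Rightarrow> bool" where
  "is_povm d m P \<longleftrightarrow> (\<forall>j<m. psd d (P j)) \<and>
     (\<forall>a<d. \<forall>b<d. (\<Sum>j<m. P j $$ (a, b)) = (1\<^sub>m d :: complex mat) $$ (a, b))"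

text \<open>The measurement map M_Q(X)_{i,j} = tr(X P_i(j)) (real for Hermitian X).\<close>
definition M_Q :: "nat \<Rightarrow> nat \<Rightarrow> (nat \<Rightarrow> nat \<Rightarrow> complex mat) \<Rightarrow> complex mat \<Rightarrow> real mat" where
  "M_Q l m Q X = mat l m (\<lambda>(i, j). Re (mtrace (X * Q i j)))"

definition ker_M_Q :: "nat \<Rightarrow> nat \<Rightarrow> nat \<Rightarrow> (nat \<Rightarrow> nat \<Rightarrow> complex mat) \<Rightarrow> complex mat set" where
  "ker_M_Q d l m Q = {X. hermitian d X \<and> M_Q l m Q X = 0\<^sub>m l m}"

definition determines_pure_states ::
  "nat \<Rightarrow> nat \<Rightarrow> nat \<Rightarrow> (nat \<Rightarrow> nat \<Rightarrow> complex mat) \<Rightarrow> bool" where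
  "determines_pure_states d l m Q \<longleftrightarrow>
     (\<forall>\<sigma> \<rho>. is_pure_state d \<sigma> \<longrightarrow> is_state d \<rho> \<longrightarrow>
        M_Q l m Q \<sigma> = M_Q l m Q \<rho> \<longrightarrow> \<rho> = \<sigma>)"

definition num_pos_eigenvalues :: "complex mat \<Rightarrow> nat" where
  "num_pos_eigenvalues A =
     (\<Sum>a \<in> {a. poly (char_poly A) a = 0 \<and> a \<in> \<real> \<and> 0 < Re a}. Polynomial.order a (char_poly A))"

end

theory Submission
  imports Defs "Jordan_Normal_Form.Schur_Decomposition"
begin

lemma herm_carr: "hermitian d A \<Longrightarrow> A \<in> carrier_mat d d" unfolding hermitian_def by blast

lemma herm_cnj:
  assumes "hermitian d A" "i < d" "j < d" shows "cnj (A $$ (j,i)) = A $$ (i,j)"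
proof -
  have "A $$ (i,j) = cnj (A $$ (j,i))" using assms unfolding hermitian_def by blast
  then show ?thesis by simp
qed

lemma hermI:
  assumes "A \<in> carrier_mat d d" "\<And>i j. i < d \<Longrightarrow> j < d \<Longrightarrow> A $$ (i,j) = cnj (A $$ (j,i))"
  shows "hermitian d A"
  unfolding hermitian_def using assms by blast


definition ip :: "nat \<Rightarrow> complex vec \<Rightarrow> complex vec \<Rightarrow> complex" where
  "ip n u v = (\<Sum>a<n. cnj (u$a) * v$a)"

lemma mv_index:
  assumes "A \<in> carrier_mat n k" "v \<in> carrier_vec k" "a < n"
  shows "(A *\<^sub>v v) $ a = (\<Sum>b<k. A$$(a,b) * v$b)"
  using assms by (auto simp: scalar_prod_def lessThan_atLeast0 intro!: sum.cong)

lemma mm_index: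
  assumes "A \<in> carrier_mat n k" "B \<in> carrier_mat k m" "a < n" "b < m"
  shows "(A * B) $$ (a,b) = (\<Sum>c<k. A$$(a,c) * B$$(c,b))"
  using assms by (auto simp: scalar_prod_def lessThan_atLeast0 intro!: sum.cong)

lemma mtrace_mult:
  assumes "A \<in> carrier_mat n k" "B \<in> carrier_mat k n"
  shows "mtrace (A * B) = (\<Sum>a<n. \<Sum>c<k. A$$(a,c) * B$$(c,a))"
proof -
  have "dim_row (A*B) = n" using assms by simp
  then show ?thesis unfolding mtrace_def
    by (simp only:) (rule sum.cong[OF refl], rule mm_index[OF assms], auto)
qed

lemma mtrace_comm:
  assumes "A \<in> carrier_mat n k" "B \<in> carrier_mat k n"
  shows "mtrace (A * B) = mtrace (B * A)"
  unfolding mtrace_mult[OF assms] mtrace_mult[OF assms(2,1)]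
  by (subst sum.swap) (simp add: mult.commute)

lemma ip_add2: "x \<in> carrier_vec n \<Longrightarrow> y \<in> carrier_vec n \<Longrightarrow> ip n u (x + y) = ip n u x + ip n u y"
  by (simp add: ip_def sum.distrib distrib_left)

lemma ip_minus2: "x \<in> carrier_vec n \<Longrightarrow> y \<in> carrier_vec n \<Longrightarrow> ip n u (x - y) = ip n u x - ip n u y"
  by (simp add: ip_def sum_subtractf right_diff_distrib)

lemma ip_smult2: "x \<in> carrier_vec n \<Longrightarrow> ip n u (c \<cdot>\<^sub>v x) = c * ip n u x"
  by (simp add: ip_def sum_distrib_left algebra_simps)

lemma ip_smult1: "x \<in> carrier_vec n \<Longrightarrow> ip n (c \<cdot>\<^sub>v x) u = cnj c * ip n x u"
  by (simp add: ip_def sum_distrib_left algebra_simps)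

lemma ip_cnj: "ip n u v = cnj (ip n v u)"
  by (simp add: ip_def mult.commute)

lemma ip_self: "ip n v v = complex_of_real (\<Sum>a<n. (cmod (v$a))^2)"
  unfolding ip_def of_real_sum complex_norm_square by (simp add: mult.commute)

lemma ip_self_pos:
  assumes "v \<in> carrier_vec n" "v \<noteq> 0\<^sub>v n"
  shows "(\<Sum>a<n. (cmod (v$a))^2) > 0"
proof -
  obtain a where a: "a < n" "v$a \<noteq> 0" using assms by (metis eq_vecI carrier_vecD index_zero_vec)
  have "(cmod (v$a))^2 \<le> (\<Sum>a<n. (cmod (v$a))^2)"
    by (rule member_le_sum) (use a in auto)
  moreover have "(cmod (v$a))^2 > 0" using a by simp
  ultimately show ?thesis by linarith
qed

lemma ip_herm:
  assumes "hermitian n A" "u \<in> carrier_vec n" "v \<in> carrier_vec n"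
  shows "ip n u (A *\<^sub>v v) = ip n (A *\<^sub>v u) v"
proof -
  have A: "A \<in> carrier_mat n n" using herm_carr[OF assms(1)] .
  have h': "\<And>i j. i<n \<Longrightarrow> j<n \<Longrightarrow> cnj (A $$ (j, i)) = A $$ (i, j)" using herm_cnj[OF assms(1)] by blast
  have "ip n u (A *\<^sub>v v) = (\<Sum>a<n. \<Sum>b<n. cnj (u$a) * A$$(a,b) * v$b)"
    unfolding ip_def[of n u] using A assms by (simp add: mv_index sum_distrib_left mult.assoc del: index_mult_mat_vec)
  also have "\<dots> = (\<Sum>b<n. \<Sum>a<n. cnj (A$$(b,a) * u$a) * v$b)"
    by (subst sum.swap) (auto intro!: sum.cong simp: h' mult.commute)
  also have "\<dots> = ip n (A *\<^sub>v u) v"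
    unfolding ip_def[of n _ v] using A assms by (simp add: mv_index sum_distrib_right cnj_sum del: index_mult_mat_vec)
  finally show ?thesis .
qed


lemma smult_mat_vec:
  assumes "R \<in> carrier_mat n n" "v \<in> carrier_vec n"
  shows "(t \<cdot>\<^sub>m R) *\<^sub>v v = t \<cdot>\<^sub>v (R *\<^sub>v v)"
proof (rule eq_vecI)
  show "dim_vec ((t \<cdot>\<^sub>m R) *\<^sub>v v) = dim_vec (t \<cdot>\<^sub>v (R *\<^sub>v v))" using assms by simp
  fix a assume "a < dim_vec (t \<cdot>\<^sub>v (R *\<^sub>v v))"
  then have a: "a < n" using assms by simp
  have tR: "t \<cdot>\<^sub>m R \<in> carrier_mat n n" using assms by simp
  show "((t \<cdot>\<^sub>m R) *\<^sub>v v) $ a = (t \<cdot>\<^sub>v (R *\<^sub>v v)) $ a"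
    using a assms by (simp add: mv_index[OF tR assms(2) a] mv_index[OF assms a] sum_distrib_left mult.assoc)
qed

lemma sum_list_const: "(\<forall>x\<in>set xs. x = t) \<Longrightarrow> sum_list xs = of_nat (length xs) * (t::complex)"
  by (induction xs) (auto simp: algebra_simps)

definition orthoeig :: "nat \<Rightarrow> complex mat \<Rightarrow> nat \<Rightarrow> (nat \<Rightarrow> complex vec) \<Rightarrow> (nat \<Rightarrow> real) \<Rightarrow> bool" where
  "orthoeig n A k us lam \<longleftrightarrow>
    (\<forall>i<k. us i \<in> carrier_vec n \<and> A *\<^sub>v us i = complex_of_real (lam i) \<cdot>\<^sub>v us i) \<and>
    (\<forall>i<k. \<forall>j<k. ip n (us i) (us j) = (if i = j then 1 else 0))"

lemma eig_ip:
  assumes "hermitian n A" "orthoeig n A k us lam" "j < k" "w \<in> carrier_vec n"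
  shows "ip n (us j) (A *\<^sub>v w) = complex_of_real (lam j) * ip n (us j) w"
proof -
  have u: "us j \<in> carrier_vec n" and e: "A *\<^sub>v us j = complex_of_real (lam j) \<cdot>\<^sub>v us j"
    using assms(2,3) unfolding orthoeig_def by auto
  show ?thesis using ip_herm[OF assms(1) u assms(4)] e ip_smult1[OF u] by simp
qed

lemma orthoeig_step:
  assumes herm: "hermitian n A" and oe: "orthoeig n A k us lam" and kn: "k < n"
  shows "\<exists>u \<mu>. orthoeig n A (Suc k) (us(k:=u)) (lam(k:=\<mu>))"
proof -
  have A: "A \<in> carrier_mat n n" using herm_carr[OF herm] .
  have us: "\<And>i. i<k \<Longrightarrow> us i \<in> carrier_vec n"
    and on: "\<And>i j. i<k \<Longrightarrow> j<k \<Longrightarrow> ip n (us i) (us j) = (if i = j then 1 else 0)"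
    using oe unfolding orthoeig_def by auto
  define R where "R = mat n n (\<lambda>(a,b). \<Sum>i<k. us i $ a * cnj (us i $ b))"
  define Pm where "Pm = 1\<^sub>m n - R"
  define t where "t = mtrace (A * Pm) / of_nat (n-k) + 1"
  define N where "N = A * Pm + t \<cdot>\<^sub>m R"
  have R: "R \<in> carrier_mat n n" by (simp add: R_def)
  have Pm: "Pm \<in> carrier_mat n n" using R unfolding Pm_def carrier_mat_def by simp
  have N: "N \<in> carrier_mat n n" using A Pm R by (simp add: N_def)
  have Rv: "(R *\<^sub>v v) $ a = (\<Sum>i<k. us i $ a * ip n (us i) v)" if v: "v \<in> carrier_vec n" and a: "a < n" for v a
  proof -
    have "(R *\<^sub>v v) $ a = (\<Sum>b<n. (\<Sum>i<k. us i $ a * cnj (us i $ b)) * v$b)"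
      using mv_index[OF R v a] a by (simp add: R_def)
    also have "\<dots> = (\<Sum>i<k. \<Sum>b<n. us i $ a * (cnj (us i $ b) * v$b))"
      by (simp add: sum_distrib_right mult.assoc) (rule sum.swap)
    also have "\<dots> = (\<Sum>i<k. us i $ a * ip n (us i) v)"
      by (simp add: ip_def sum_distrib_left)
    finally show ?thesis .
  qed
  have ipR: "ip n (us j) (R *\<^sub>v v) = ip n (us j) v" if v: "v \<in> carrier_vec n" and j: "j < k" for v j
  proof -
    have "ip n (us j) (R *\<^sub>v v) = (\<Sum>a<n. cnj (us j $ a) * (\<Sum>i<k. us i $ a * ip n (us i) v))"
      unfolding ip_def[of n "us j" "R *\<^sub>v v"] by (rule sum.cong) (auto simp: Rv[OF v])
    also have "\<dots> = (\<Sum>i<k. (\<Sum>a<n. cnj (us j $ a) * us i $ a) * ip n (us i) v)"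
      by (simp add: sum_distrib_left sum_distrib_right mult.assoc) (rule sum.swap)
    also have "\<dots> = (\<Sum>i<k. if j = i then ip n (us i) v else 0)"
    proof (rule sum.cong[OF refl])
      fix i assume "i \<in> {..<k}"
      then have "(\<Sum>a<n. cnj (us j $ a) * us i $ a) = (if j = i then 1 else 0)"
        using on[OF j, of i] unfolding ip_def by simp
      then show "(\<Sum>a<n. cnj (us j $ a) * us i $ a) * ip n (us i) v = (if j = i then ip n (us i) v else 0)"
        by simp
    qed
    also have "\<dots> = ip n (us j) v" using j by simp
    finally show ?thesis .
  qed
  have R0: "R *\<^sub>v v = 0\<^sub>v n" if v: "v \<in> carrier_vec n" and o: "\<forall>j<k. ip n (us j) v = 0" for v
  proof (rule eq_vecI)
    fix a assume "a < dim_vec (0\<^sub>v n :: complex vec)"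
    then have a: "a < n" by simp
    show "(R *\<^sub>v v) $ a = 0\<^sub>v n $ a" using Rv[OF v a] o a by simp
  qed (use R in simp)
  have Pmv: "Pm *\<^sub>v v = v - R *\<^sub>v v" if v: "v \<in> carrier_vec n" for v
    unfolding Pm_def using minus_mult_distrib_mat_vec[OF one_carrier_mat R v] one_mult_mat_vec[OF v] by simp
  have Nv: "N *\<^sub>v v = A *\<^sub>v (Pm *\<^sub>v v) + t \<cdot>\<^sub>v (R *\<^sub>v v)" if v: "v \<in> carrier_vec n" for v
  proof -
    have "N *\<^sub>v v = (A * Pm) *\<^sub>v v + (t \<cdot>\<^sub>m R) *\<^sub>v v"
      unfolding N_def by (rule add_mult_distrib_mat_vec) (use A Pm R v in auto)
    then show ?thesis using assoc_mult_mat_vec[OF A Pm v] smult_mat_vec[OF R v] by simp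
  qed
  have ipN: "ip n (us j) (N *\<^sub>v v) = t * ip n (us j) v" if v: "v \<in> carrier_vec n" and j: "j < k" for v j
  proof -
    have c1: "Pm *\<^sub>v v \<in> carrier_vec n" "R *\<^sub>v v \<in> carrier_vec n" "A *\<^sub>v (Pm *\<^sub>v v) \<in> carrier_vec n"
      using A Pm R v by auto
    have "ip n (us j) (N *\<^sub>v v) = ip n (us j) (A *\<^sub>v (Pm *\<^sub>v v)) + t * ip n (us j) (R *\<^sub>v v)"
      unfolding Nv[OF v] using c1 by (simp add: ip_add2 ip_smult2)
    also have "ip n (us j) (A *\<^sub>v (Pm *\<^sub>v v)) = complex_of_real (lam j) * ip n (us j) (Pm *\<^sub>v v)"
      by (rule eig_ip[OF herm oe j c1(1)])
    also have "ip n (us j) (Pm *\<^sub>v v) = 0"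
      unfolding Pmv[OF v] using c1 v by (simp add: ip_minus2 ipR[OF v j])
    finally show ?thesis using ipR[OF v j] by simp
  qed
  have trR: "mtrace R = of_nat k"
  proof -
    have "mtrace R = (\<Sum>a<n. \<Sum>i<k. us i $ a * cnj (us i $ a))"
      unfolding mtrace_def by (simp add: R_def)
    also have "\<dots> = (\<Sum>i<k. ip n (us i) (us i))"
      unfolding ip_def by (subst sum.swap) (simp add: mult.commute)
    also have "\<dots> = (\<Sum>i<k. 1)" by (rule sum.cong) (auto simp: on)
    finally show ?thesis by simp
  qed
  have trN: "mtrace N = mtrace (A * Pm) + t * of_nat k"
  proof -
    have "mtrace N = (\<Sum>a<n. (A * Pm) $$ (a,a) + t * R $$ (a,a))"
      unfolding mtrace_def N_def using A Pm R by (intro sum.cong) auto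
    also have "\<dots> = mtrace (A * Pm) + t * mtrace R"
      unfolding mtrace_def using A Pm R by (simp add: sum.distrib sum_distrib_left)
    finally show ?thesis using trR by simp
  qed
  obtain es where es: "char_poly N = (\<Prod>a\<leftarrow>es. [:- a, 1:])" "length es = n"
    using char_poly_factorized[OF N] by blast
  obtain B P Q where sd: "schur_decomposition N es = (B,P,Q)" by (cases "schur_decomposition N es") auto
  from schur_decomposition[OF N es(1) sd] have sw: "similar_mat_wit N B P Q" and dB: "diag_mat B = es"
    by auto
  note swd = similar_mat_witD2[OF N sw]
  have trB: "mtrace N = mtrace B"
  proof -
    have PB: "P * B \<in> carrier_mat n n" using swd by auto
    have "mtrace N = mtrace ((P * B) * Q)" using swd by simp
    also have "\<dots> = mtrace (Q * (P * B))" by (rule mtrace_comm[OF PB swd(7)])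
    also have "Q * (P * B) = (Q * P) * B" using swd(5,6,7) by (simp add: assoc_mult_mat)
    also have "\<dots> = B" using swd(2,5) by simp
    finally show ?thesis .
  qed
  have trB2: "mtrace B = sum_list es"
  proof -
    have "dim_row B = n" using swd by auto
    then show ?thesis unfolding dB[symmetric] mtrace_def diag_mat_def
      by (simp add: interv_sum_list_conv_sum_set_nat atLeast0LessThan)
  qed
  have "\<exists>e\<in>set es. e \<noteq> t"
  proof (rule ccontr)
    assume "\<not> ?thesis"
    then have "sum_list es = of_nat n * t" using sum_list_const[of es t] es(2) by auto
    then have "mtrace (A * Pm) + t * of_nat k = of_nat n * t" using trN trB trB2 by simp
    then have eq: "mtrace (A * Pm) = of_nat (n - k) * t" using kn by (simp add: of_nat_diff algebra_simps)
    have nz: "(of_nat (n - k) :: complex) \<noteq> 0" using kn by simp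
    from eq have "mtrace (A * Pm) = mtrace (A * Pm) + of_nat (n - k)"
      unfolding t_def using nz by (simp add: algebra_simps)
    then show False using nz by simp
  qed
  then obtain e where e: "e \<in> set es" "e \<noteq> t" by blast
  have "poly (char_poly N) e = 0" unfolding es(1) by (rule linear_poly_root[OF e(1)])
  then have "eigenvalue N e" using eigenvalue_root_char_poly[OF N] by simp
  then obtain v where v: "v \<in> carrier_vec n" "v \<noteq> 0\<^sub>v n" "N *\<^sub>v v = e \<cdot>\<^sub>v v"
    unfolding eigenvalue_def eigenvector_def using N by auto
  have orth: "ip n (us j) v = 0" if j: "j < k" for j
  proof -
    have "e * ip n (us j) v = t * ip n (us j) v"
      using ipN[OF v(1) j] v by (simp add: ip_smult2)
    then show ?thesis using e(2) by simp
  qed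
  have Rv0: "R *\<^sub>v v = 0\<^sub>v n" using R0[OF v(1)] orth by auto
  have Av: "A *\<^sub>v v = e \<cdot>\<^sub>v v"
  proof -
    have "Pm *\<^sub>v v = v" using Pmv[OF v(1)] Rv0 v(1) by simp
    moreover have "t \<cdot>\<^sub>v 0\<^sub>v n = (0\<^sub>v n :: complex vec)" by (rule eq_vecI) auto
    moreover have "A *\<^sub>v v + 0\<^sub>v n = A *\<^sub>v v" using A v(1) by (intro right_zero_vec) auto
    ultimately show ?thesis using Nv[OF v(1)] Rv0 v(3) by simp
  qed
  define s where "s = (\<Sum>a<n. (cmod (v$a))^2)"
  have s: "s > 0" "ip n v v = complex_of_real s" using ip_self_pos[OF v(1,2)] ip_self unfolding s_def by auto
  have "ip n v (A *\<^sub>v v) = ip n (A *\<^sub>v v) v" by (rule ip_herm[OF herm v(1) v(1)])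
  then have "e * ip n v v = cnj e * ip n v v" unfolding Av using v(1) by (simp add: ip_smult1 ip_smult2)
  then have "cnj e = e" using s by simp
  then have "Im (cnj e) = Im e" by simp
  then have "Im e = 0" by simp
  define \<mu> where "\<mu> = Re e"
  have e_eq: "e = complex_of_real \<mu>" unfolding \<mu>_def using \<open>Im e = 0\<close> by (simp add: complex_eq_iff)
  define c where "c = complex_of_real (1 / sqrt s)"
  define u where "u = c \<cdot>\<^sub>v v"
  have u: "u \<in> carrier_vec n" unfolding u_def using v(1) by simp
  have Au: "A *\<^sub>v u = complex_of_real \<mu> \<cdot>\<^sub>v u"
    unfolding u_def using mult_mat_vec[OF A v(1)] Av e_eq by (simp add: smult_smult_assoc mult.commute)
  have r: "(1/sqrt s) * (1/sqrt s) * s = 1" using s(1) by (simp add: real_sqrt_mult_self)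
  have cc: "cnj c * c * complex_of_real s = 1"
    unfolding c_def complex_cnj_complex_of_real of_real_mult[symmetric] r by simp
  have uu: "ip n u u = 1"
    unfolding u_def using v(1) s(2) cc by (simp add: ip_smult1 ip_smult2 mult.assoc mult.left_commute)
  have uj: "ip n (us j) u = 0" if j: "j < k" for j
    unfolding u_def using v(1) orth[OF j] by (simp add: ip_smult2)
  have ju: "ip n u (us j) = 0" if j: "j < k" for j
    using ip_cnj[of n u "us j"] uj[OF j] by simp
  show ?thesis
  proof (intro exI[of _ u] exI[of _ \<mu>])
    show "orthoeig n A (Suc k) (us(k := u)) (lam(k := \<mu>))"
      unfolding orthoeig_def
    proof (intro conjI allI impI)
      fix i assume i: "i < Suc k"
      show "(us(k := u)) i \<in> carrier_vec n"
        using i u oe unfolding orthoeig_def by (cases "i = k") auto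
    next
      fix i assume i: "i < Suc k"
      show "A *\<^sub>v (us(k := u)) i = complex_of_real ((lam(k := \<mu>)) i) \<cdot>\<^sub>v (us(k := u)) i"
        using i Au oe unfolding orthoeig_def by (cases "i = k") auto
    next
      fix i j assume i: "i < Suc k" and j: "j < Suc k"
      show "ip n ((us(k := u)) i) ((us(k := u)) j) = (if i = j then 1 else 0)"
        using i j uu uj ju on by (cases "i = k"; cases "j = k") auto
    qed
  qed
qed



lemma spectral:
  assumes "hermitian n A"
  shows "\<exists>us lam. orthoeig n A n us lam"
proof -
  have "k \<le> n \<Longrightarrow> \<exists>us lam. orthoeig n A k us lam" for k
  proof (induction k)
    case 0
    show ?case by (auto simp: orthoeig_def)
  next
    case (Suc k)
    then obtain us lam where "orthoeig n A k us lam" by auto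
    from orthoeig_step[OF assms this] Suc.prems show ?case by auto
  qed
  then show ?thesis by simp
qed

lemma sum3_swap: "(\<Sum>a\<in>A. \<Sum>b\<in>B. \<Sum>i\<in>C. f a b i) = (\<Sum>i\<in>C. \<Sum>a\<in>A. \<Sum>b\<in>B. f a b i)"
proof -
  have "(\<Sum>a\<in>A. \<Sum>b\<in>B. \<Sum>i\<in>C. f a b i) = (\<Sum>a\<in>A. \<Sum>i\<in>C. \<Sum>b\<in>B. f a b i)"
    by (rule sum.cong[OF refl]) (rule sum.swap)
  also have "\<dots> = (\<Sum>i\<in>C. \<Sum>a\<in>A. \<Sum>b\<in>B. f a b i)" by (rule sum.swap)
  finally show ?thesis .
qed

lemma prod_sums: "(c::complex) * (\<Sum>a\<in>A. f a) * (\<Sum>b\<in>B. g b) = (\<Sum>a\<in>A. \<Sum>b\<in>B. c * f a * g b)"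
proof -
  have "c * (\<Sum>a\<in>A. f a) * (\<Sum>b\<in>B. g b) = c * ((\<Sum>a\<in>A. f a) * (\<Sum>b\<in>B. g b))" by (simp add: mult.assoc)
  also have "\<dots> = c * (\<Sum>a\<in>A. \<Sum>b\<in>B. f a * g b)" by (simp only: sum_product)
  also have "\<dots> = (\<Sum>a\<in>A. \<Sum>b\<in>B. c * f a * g b)" by (simp add: sum_distrib_left mult.assoc)
  finally show ?thesis .
qed

context
  fixes n A us lam
  assumes herm: "hermitian n A" and oe: "orthoeig n A n us lam"
begin

lemma A_carr: "A \<in> carrier_mat n n" using herm_carr[OF herm] .

lemma us_carr: "i < n \<Longrightarrow> us i \<in> carrier_vec n" using oe orthoeig_def by auto

lemma us_dim[simp]: "i < n \<Longrightarrow> dim_vec (us i) = n" using us_carr by auto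

lemma us_eig: "i < n \<Longrightarrow> A *\<^sub>v us i = complex_of_real (lam i) \<cdot>\<^sub>v us i" using oe orthoeig_def by auto

lemma us_on: "i < n \<Longrightarrow> j < n \<Longrightarrow> ip n (us i) (us j) = (if i = j then 1 else 0)" using oe orthoeig_def by auto

definition "UU = mat n n (\<lambda>(a,i). us i $ a)"
definition "UH = mat n n (\<lambda>(i,a). cnj (us i $ a))"

lemma UU_carr: "UU \<in> carrier_mat n n" by (simp add: UU_def)
lemma UH_carr: "UH \<in> carrier_mat n n" by (simp add: UH_def)

lemma UH_UU: "UH * UU = 1\<^sub>m n"
proof (rule eq_matI)
  fix i j assume "i < dim_row (1\<^sub>m n :: complex mat)" "j < dim_col (1\<^sub>m n :: complex mat)"
  then have ij: "i < n" "j < n" by auto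
  have "(UH * UU) $$ (i,j) = (\<Sum>c<n. UH $$ (i,c) * UU $$ (c,j))" by (rule mm_index[OF UH_carr UU_carr ij])
  also have "\<dots> = ip n (us i) (us j)" unfolding ip_def using ij by (simp add: UH_def UU_def)
  finally show "(UH * UU) $$ (i,j) = 1\<^sub>m n $$ (i,j)" using us_on[OF ij] ij by simp
qed (auto simp: UH_def UU_def)

lemma UU_UH: "UU * UH = 1\<^sub>m n"
  by (rule mat_mult_left_right_inverse[OF UH_carr UU_carr UH_UU])

lemma complete: "a < n \<Longrightarrow> b < n \<Longrightarrow> (\<Sum>i<n. us i $ a * cnj (us i $ b)) = (if a = b then 1 else 0)"
proof -
  assume ab: "a < n" "b < n"
  have "(UU * UH) $$ (a,b) = (\<Sum>i<n. UU $$ (a,i) * UH $$ (i,b))" by (rule mm_index[OF UU_carr UH_carr ab])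
  also have "\<dots> = (\<Sum>i<n. us i $ a * cnj (us i $ b))" using ab by (simp add: UH_def UU_def)
  finally show ?thesis using UU_UH ab by simp
qed

lemma A_entry: "a < n \<Longrightarrow> b < n \<Longrightarrow> A $$ (a,b) = (\<Sum>i<n. complex_of_real (lam i) * us i $ a * cnj (us i $ b))"
proof -
  assume ab: "a < n" "b < n"
  have "A $$ (a,b) = (\<Sum>c<n. if c = b then A $$ (a,c) else 0)" using ab by simp
  also have "\<dots> = (\<Sum>c<n. A $$ (a,c) * (\<Sum>i<n. us i $ c * cnj (us i $ b)))"
    by (rule sum.cong) (auto simp: complete ab)
  also have "\<dots> = (\<Sum>i<n. (\<Sum>c<n. A $$ (a,c) * us i $ c) * cnj (us i $ b))"
    by (simp add: sum_distrib_left sum_distrib_right mult.assoc) (rule sum.swap)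
  also have "\<dots> = (\<Sum>i<n. (A *\<^sub>v us i) $ a * cnj (us i $ b))"
    by (rule sum.cong) (auto simp: mv_index[OF A_carr us_carr ab(1)])
  also have "\<dots> = (\<Sum>i<n. complex_of_real (lam i) * us i $ a * cnj (us i $ b))"
    by (rule sum.cong) (auto simp: us_eig us_carr ab)
  finally show ?thesis .
qed

lemma quad_form:
  assumes v: "v \<in> carrier_vec n"
  shows "ip n v (A *\<^sub>v v) = complex_of_real (\<Sum>i<n. lam i * (cmod (ip n (us i) v))^2)"
proof -
  have "ip n v (A *\<^sub>v v) = (\<Sum>a<n. \<Sum>b<n. cnj (v$a) * A $$ (a,b) * v$b)"
    unfolding ip_def by (rule sum.cong) (auto simp: mv_index[OF A_carr v] sum_distrib_left mult.assoc)
  also have "\<dots> = (\<Sum>a<n. \<Sum>b<n. \<Sum>i<n. complex_of_real (lam i) * (cnj (v$a) * us i $ a) * (cnj (us i $ b) * v$b))"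
    by (intro sum.cong refl) (auto simp: A_entry sum_distrib_left sum_distrib_right mult_ac)
  also have "\<dots> = (\<Sum>i<n. \<Sum>a<n. \<Sum>b<n. complex_of_real (lam i) * (cnj (v$a) * us i $ a) * (cnj (us i $ b) * v$b))"
    by (rule sum3_swap)
  also have "\<dots> = (\<Sum>i<n. complex_of_real (lam i) * (\<Sum>a<n. cnj (v$a) * us i $ a) * (\<Sum>b<n. cnj (us i $ b) * v$b))"
    by (rule sum.cong[OF refl]) (rule prod_sums[symmetric])
  also have "\<dots> = (\<Sum>i<n. complex_of_real (lam i) * (cnj (ip n (us i) v) * ip n (us i) v))"
    by (rule sum.cong) (auto simp: ip_def cnj_sum mult.commute mult.assoc)
  also have "\<dots> = complex_of_real (\<Sum>i<n. lam i * (cmod (ip n (us i) v))^2)"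
    unfolding of_real_sum by (rule sum.cong[OF refl]) (simp only: of_real_mult complex_norm_square mult.commute)
  finally show ?thesis .
qed

lemma trace_spec: "mtrace A = complex_of_real (\<Sum>i<n. lam i)"
proof -
  have "mtrace A = (\<Sum>a<n. \<Sum>i<n. complex_of_real (lam i) * us i $ a * cnj (us i $ a))"
    unfolding mtrace_def using A_carr by (intro sum.cong) (auto simp: A_entry)
  also have "\<dots> = (\<Sum>i<n. complex_of_real (lam i) * ip n (us i) (us i))"
    unfolding ip_def by (subst sum.swap) (simp add: sum_distrib_left mult_ac)
  also have "\<dots> = (\<Sum>i<n. complex_of_real (lam i))" by (rule sum.cong) (auto simp: us_on)
  finally show ?thesis by simp
qed

lemma zero_spec: "(\<forall>i<n. lam i = 0) \<Longrightarrow> A = 0\<^sub>m n n"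
  by (rule eq_matI) (use A_carr in \<open>auto simp: A_entry\<close>)

definition "DD = mat n n (\<lambda>(i,j). if i = j then complex_of_real (lam i) else 0)"

lemma char_poly_spec: "char_poly A = (\<Prod>a\<leftarrow>map (\<lambda>i. complex_of_real (lam i)) [0..<n]. [:- a, 1:])"
proof -
  have D: "DD \<in> carrier_mat n n" by (simp add: DD_def)
  have UD: "UU * DD \<in> carrier_mat n n" using UU_carr D by simp
  have eq: "A = UU * DD * UH"
  proof (rule eq_matI)
    fix a b assume "a < dim_row (UU * DD * UH)" "b < dim_col (UU * DD * UH)"
    then have ab: "a < n" "b < n" using UU_carr UH_carr by auto
    have "(UU * DD * UH) $$ (a,b) = (\<Sum>c<n. (UU * DD) $$ (a,c) * UH $$ (c,b))"
      by (rule mm_index[OF UD UH_carr ab])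
    also have "\<dots> = (\<Sum>c<n. (us c $ a * complex_of_real (lam c)) * cnj (us c $ b))"
    proof (rule sum.cong[OF refl])
      fix c assume c: "c \<in> {..<n}"
      have "(UU * DD) $$ (a,c) = (\<Sum>i<n. UU $$ (a,i) * DD $$ (i,c))"
        by (rule mm_index[OF UU_carr D ab(1)]) (use c in auto)
      also have "\<dots> = (\<Sum>i<n. if i = c then us c $ a * complex_of_real (lam c) else 0)"
        by (rule sum.cong) (use ab c in \<open>auto simp: UU_def DD_def\<close>)
      also have "\<dots> = us c $ a * complex_of_real (lam c)" using c by simp
      finally show "(UU * DD) $$ (a,c) * UH $$ (c,b) = (us c $ a * complex_of_real (lam c)) * cnj (us c $ b)"
        using c ab by (simp add: UH_def)
    qed
    finally show "A $$ (a,b) = (UU * DD * UH) $$ (a,b)" using A_entry[OF ab] by (simp add: mult_ac)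
  qed (use A_carr UU_carr UH_carr in auto)
  have "similar_mat A DD"
    by (rule similar_matI[of A DD UU UH n]) (use A_carr D UU_carr UH_carr UU_UH UH_UU eq in auto)
  then have "char_poly A = char_poly DD" by (rule char_poly_similar)
  also have "\<dots> = (\<Prod>a\<leftarrow>diag_mat DD. [:- a, 1:])"
    by (rule char_poly_upper_triangular[OF D]) (auto simp: upper_triangular_def DD_def)
  also have "diag_mat DD = map (\<lambda>i. complex_of_real (lam i)) [0..<n]"
    unfolding diag_mat_def by (auto simp: DD_def)
  finally show ?thesis .
qed

end



lemma prod_lin_nz: "(\<Prod>x\<leftarrow>xs. [:- x, 1::complex:]) \<noteq> 0"
  by (subst prod_list_zero_iff) auto

lemma order_prod_lin:
  "Polynomial.order a (\<Prod>x\<leftarrow>map c [0..<n]. [:- x, 1::complex:]) = card {i. i < n \<and> c i = a}"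
proof (induction n)
  case 0
  then show ?case by simp
next
  case (Suc n)
  have eq: "(\<Prod>x\<leftarrow>map c [0..<Suc n]. [:- x, 1::complex:]) = (\<Prod>x\<leftarrow>map c [0..<n]. [:- x, 1:]) * [:- c n, 1:]"
    by simp
  have nz: "(\<Prod>x\<leftarrow>map c [0..<n]. [:- x, 1::complex:]) * [:- c n, 1:] \<noteq> 0"
  proof -
    have "[:- c n, 1::complex:] \<noteq> 0" by simp
    then show ?thesis using prod_lin_nz[of "map c [0..<n]"] by (metis mult_eq_0_iff)
  qed
  have set: "{i. i < Suc n \<and> c i = a} = {i. i < n \<and> c i = a} \<union> (if c n = a then {n} else {})"
    by (auto simp: less_Suc_eq)
  have "card {i. i < Suc n \<and> c i = a} = card {i. i < n \<and> c i = a} + (if c n = a then 1 else 0)"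
    unfolding set by (auto simp: card_insert_if)
  then show ?case unfolding eq order_mult[OF nz] Suc.IH order_linear' by auto
qed

lemma num_pos_spec_aux:
  assumes cp: "char_poly A = (\<Prod>x\<leftarrow>map (\<lambda>i. complex_of_real (lam i)) [0..<n]. [:- x, 1:])"
  shows "num_pos_eigenvalues A = card {i. i < n \<and> lam i > 0}"
proof -
  define c where "c = (\<lambda>i. complex_of_real (lam i))"
  define I where "I = {i. i < n \<and> lam i > 0}"
  have S: "{a. poly (char_poly A) a = 0 \<and> a \<in> \<real> \<and> 0 < Re a} = c ` I"
  proof
    show "{a. poly (char_poly A) a = 0 \<and> a \<in> \<real> \<and> 0 < Re a} \<subseteq> c ` I"
      unfolding cp poly_prod_list_zero_iff I_def c_def by auto
    show "c ` I \<subseteq> {a. poly (char_poly A) a = 0 \<and> a \<in> \<real> \<and> 0 < Re a}"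
      unfolding cp poly_prod_list_zero_iff I_def c_def by auto
  qed
  have "num_pos_eigenvalues A = (\<Sum>a\<in>c ` I. card {i. i < n \<and> c i = a})"
    unfolding num_pos_eigenvalues_def S unfolding cp c_def order_prod_lin ..
  also have "\<dots> = (\<Sum>a\<in>c ` I. card {i\<in>I. c i = a})"
    by (rule sum.cong) (auto simp: I_def c_def intro!: arg_cong[where f=card])
  also have "\<dots> = card (\<Union>a\<in>c ` I. {i\<in>I. c i = a})"
    by (rule card_UN_disjoint[symmetric]) (auto simp: I_def)
  also have "(\<Union>a\<in>c ` I. {i\<in>I. c i = a}) = I" by auto
  finally show ?thesis unfolding I_def .
qed



lemma rank1_factor:
  assumes A: "(\<sigma> :: complex mat) \<in> carrier_mat n n" and r: "vec_space.rank n \<sigma> = 1"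
  shows "\<exists>w g. \<forall>x<n. \<forall>y<n. \<sigma> $$ (x,y) = w $ x * g y"
proof -
  interpret vec_space "TYPE(complex)" n .
  let ?P = "\<lambda>T. T \<subseteq> set (cols \<sigma>) \<and> \<not> lin_dep T"
  have "\<not> lin_dep {}"
  proof
    assume "lin_dep {}"
    then obtain A a v where "A \<subseteq> {}" "v \<in> A" unfolding lin_dep_def by blast
    then show False by blast
  qed
  then have P0: "?P {}" by simp
  have "\<exists>A. finite A \<and> maximal A ?P \<and> {} \<subseteq> A"
    by (rule maximal_exists_superset[of "set (cols \<sigma>)" ?P "{}"]) (use P0 in simp_all)
  then obtain S where S: "finite S" "maximal S ?P" by blast
  have Smax: "\<And>B. S \<subseteq> B \<Longrightarrow> ?P B \<Longrightarrow> B = S" using S(2) unfolding maximal_def by blast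
  have "card S = 1" using rank_card_indpt[OF A S(2)] r by simp
  then obtain w where Sw: "S = {w}" by (rule card_1_singletonE)
  have colsC: "set (cols \<sigma>) \<subseteq> carrier_vec n" using cols_dim[of \<sigma>] A by simp
  have wc: "w \<in> set (cols \<sigma>)" and wi: "\<not> lin_dep {w}" using S(2) Sw unfolding maximal_def by auto
  have w: "w \<in> carrier_vec n" using wc colsC by auto
  have inspan: "c \<in> span {w}" if c: "c \<in> set (cols \<sigma>)" for c
  proof (cases "c = w")
    case True
    then show ?thesis using span_self[OF w] by simp
  next
    case False
    show ?thesis
    proof (rule ccontr)
      assume ns: "c \<notin> span {w}"
      have cC: "c \<in> carrier_vec n" using c colsC by auto
      have "(c \<in> span {w}) = lin_dep ({w} \<union> {c})"
        by (rule lin_dep_iff_in_span[of "{w}" c]) (use w wi cC False in simp_all)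
      with ns have "\<not> lin_dep ({w} \<union> {c})" by simp
      then have "?P ({w} \<union> {c})" using wc c by auto
      then have "{w} \<union> {c} = {w}" using Smax[of "{w} \<union> {c}"] Sw by simp
      with False show False by auto
    qed
  qed
  have "\<exists>a. col \<sigma> y = a \<cdot>\<^sub>v w" if y: "y < n" for y
  proof -
    have cy: "col \<sigma> y \<in> set (cols \<sigma>)" using y A by (simp add: cols_def)
    obtain a where a: "lincomb a {w} = col \<sigma> y"
      using finite_in_span[OF _ _ inspan[OF cy]] w by auto
    have "col \<sigma> y = a w \<cdot>\<^sub>v w"
    proof (rule eq_vecI)
      fix i assume "i < dim_vec (a w \<cdot>\<^sub>v w)"
      then have i: "i < n" using w by simp
      have "lincomb a {w} $ i = a w * w $ i" using lincomb_index[OF i] w by simp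
      then show "col \<sigma> y $ i = (a w \<cdot>\<^sub>v w) $ i" using a i w by simp
    qed (use A w in simp)
    then show ?thesis by blast
  qed
  then obtain g where g: "\<And>y. y < n \<Longrightarrow> col \<sigma> y = g y \<cdot>\<^sub>v w" by metis
  show ?thesis
  proof (intro exI allI impI)
    fix x y assume x: "x < n" and y: "y < n"
    have "\<sigma> $$ (x,y) = col \<sigma> y $ x" using A x y by simp
    also have "\<dots> = w $ x * g y" using g[OF y] x w by simp
    finally show "\<sigma> $$ (x,y) = w $ x * g y" .
  qed
qed



lemma qf_ip:
  assumes "A \<in> carrier_mat d d" "v \<in> carrier_vec d"
  shows "(\<Sum>i<d. \<Sum>j<d. cnj (v $ i) * A $$ (i, j) * v $ j) = ip d v (A *\<^sub>v v)"
  unfolding ip_def[of d v] by (rule sum.cong[OF refl]) (simp add: mv_index[OF assms] sum_distrib_left mult.assoc del: index_mult_mat_vec)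

lemma psd_ip: "psd d A \<longleftrightarrow> hermitian d A \<and> (\<forall>v\<in>carrier_vec d. 0 \<le> Re (ip d v (A *\<^sub>v v)))"
proof (cases "hermitian d A")
  case True
  have "(\<forall>v\<in>carrier_vec d. 0 \<le> Re (\<Sum>i<d. \<Sum>j<d. cnj (v $ i) * A $$ (i, j) * v $ j)) \<longleftrightarrow>
        (\<forall>v\<in>carrier_vec d. 0 \<le> Re (ip d v (A *\<^sub>v v)))"
    by (intro ball_cong refl) (simp only: qf_ip[OF herm_carr[OF True]])
  then show ?thesis unfolding psd_def using True by blast
next
  case False
  then show ?thesis unfolding psd_def by blast
qed

lemma ip_add1: "x \<in> carrier_vec n \<Longrightarrow> y \<in> carrier_vec n \<Longrightarrow> ip n (x + y) u = ip n x u + ip n y u"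
  by (simp add: ip_def sum.distrib distrib_right)

lemma herm_minus:
  assumes hA: "hermitian d A" and hB: "hermitian d B" shows "hermitian d (A - B)"
proof (rule hermI)
  show "A - B \<in> carrier_mat d d" using herm_carr[OF hA] herm_carr[OF hB] unfolding carrier_mat_def by simp
  fix i j assume ij: "i < d" "j < d"
  show "(A - B) $$ (i,j) = cnj ((A - B) $$ (j,i))"
    using herm_carr[OF hA] herm_carr[OF hB] herm_cnj[OF hA ij] herm_cnj[OF hB ij] ij by simp
qed



lemma mtrace_lin:
  assumes A: "A \<in> carrier_mat d d" and B: "B \<in> carrier_mat d d" and C: "C \<in> carrier_mat d d"
  shows "mtrace ((A - c \<cdot>\<^sub>m B) * C) = mtrace (A * C) - c * mtrace (B * C)"
proof -
  have AB: "A - c \<cdot>\<^sub>m B \<in> carrier_mat d d" using A B unfolding carrier_mat_def by simp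
  show ?thesis
    unfolding mtrace_mult[OF AB C] mtrace_mult[OF A C] mtrace_mult[OF B C]
    using A B by (simp add: sum_subtractf sum_distrib_left algebra_simps)
qed

lemma rank_outer:
  assumes psi: "\<psi> \<in> carrier_vec n" "ip n \<psi> \<psi> = 1"
  shows "vec_space.rank n (mat n n (\<lambda>(a,b). \<psi> $ a * cnj (\<psi> $ b))) = 1"
proof -
  interpret vec_space "TYPE(complex)" n .
  define \<sigma> where "\<sigma> = mat n n (\<lambda>(a,b). \<psi> $ a * cnj (\<psi> $ b))"
  have S: "\<sigma> \<in> carrier_mat n n" by (simp add: \<sigma>_def)
  have le: "rank \<sigma> \<le> 1"
    by (rule rank_le_1_product_entries[OF S, of "\<lambda>a. \<psi> $ a" "\<lambda>b. cnj (\<psi> $ b)"]) (auto simp: \<sigma>_def)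
  obtain b where b: "b < n" "\<psi> $ b \<noteq> 0"
  proof -
    have "\<psi> \<noteq> 0\<^sub>v n" using psi by (auto simp: ip_def)
    then show ?thesis using that psi by (metis eq_vecI carrier_vecD index_zero_vec)
  qed
  let ?c = "col \<sigma> b"
  have cC: "?c \<in> carrier_vec n" using S b by simp
  have cn: "?c \<noteq> 0\<^sub>v n"
  proof
    assume "?c = 0\<^sub>v n"
    then have "?c $ b = 0" using b by simp
    then show False using b S by (simp add: \<sigma>_def)
  qed
  have ci: "c \<in> set (cols \<sigma>)" if "c = ?c" for c using that b S by (simp add: cols_def)
  have e: "\<not> lin_dep {}"
  proof
    assume "lin_dep {}"
    then obtain A a v where "A \<subseteq> {}" "v \<in> A" unfolding lin_dep_def by blast
    then show False by blast
  qed
  have "(?c \<in> span {}) = lin_dep ({} \<union> {?c})"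
    by (rule lin_dep_iff_in_span[of "{}" ?c]) (use cC e in simp_all)
  moreover have "?c \<notin> span {}" using cn span_empty by simp
  ultimately have li: "\<not> lin_dep {?c}" by simp
  have "rank \<sigma> \<ge> card {?c}"
    by (rule rank_ge_card_indpt[OF S]) (use ci li in auto)
  then show ?thesis using le unfolding \<sigma>_def by simp
qed



lemma povm_carr:
  assumes "is_povm d m P" "j < m" shows "P j \<in> carrier_mat d d"
proof -
  have "psd d (P j)" using assms unfolding is_povm_def by blast
  then have "hermitian d (P j)" unfolding psd_def by blast
  then show ?thesis by (rule herm_carr)
qed

lemma ker_minus:
  assumes QP: "\<forall>i<l. is_povm d m (Q i)"
    and hs: "hermitian d \<sigma>" and hr: "hermitian d \<rho>" and eq: "M_Q l m Q \<sigma> = M_Q l m Q \<rho>"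
  shows "\<sigma> - \<rho> \<in> ker_M_Q d l m Q"
proof -
  have S: "\<sigma> \<in> carrier_mat d d" and R: "\<rho> \<in> carrier_mat d d" using hs hr herm_carr by auto
  have "M_Q l m Q (\<sigma> - \<rho>) = 0\<^sub>m l m"
  proof (rule eq_matI)
    fix i j assume "i < dim_row (0\<^sub>m l m :: real mat)" "j < dim_col (0\<^sub>m l m :: real mat)"
    then have ij: "i < l" "j < m" by auto
    have C: "Q i j \<in> carrier_mat d d" using QP ij povm_carr by auto
    have "M_Q l m Q \<sigma> $$ (i,j) = M_Q l m Q \<rho> $$ (i,j)" using eq by simp
    then have e: "Re (mtrace (\<sigma> * Q i j)) = Re (mtrace (\<rho> * Q i j))" using ij by (simp add: M_Q_def)
    have "mtrace ((\<sigma> - 1 \<cdot>\<^sub>m \<rho>) * Q i j) = mtrace (\<sigma> * Q i j) - 1 * mtrace (\<rho> * Q i j)"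
      by (rule mtrace_lin[OF S R C])
    moreover have "\<sigma> - 1 \<cdot>\<^sub>m \<rho> = \<sigma> - \<rho>" by (rule eq_matI) (use S R in auto)
    ultimately have "mtrace ((\<sigma> - \<rho>) * Q i j) = mtrace (\<sigma> * Q i j) - mtrace (\<rho> * Q i j)" by simp
    then show "M_Q l m Q (\<sigma> - \<rho>) $$ (i,j) = 0\<^sub>m l m $$ (i,j)" using ij e by (simp add: M_Q_def)
  qed (auto simp: M_Q_def)
  then show ?thesis unfolding ker_M_Q_def using herm_minus[OF hs hr] by simp
qed

lemma two_elems:
  assumes "2 \<le> card S" obtains i j where "i \<in> S" "j \<in> S" "i \<noteq> j"
proof -
  have "S \<noteq> {}" using assms by auto
  then obtain i where i: "i \<in> S" by auto
  have fin: "finite S" using assms by (metis card.infinite not_numeral_le_zero)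
  have "card (S - {i}) > 0" using assms i fin by (simp add: card_Diff_singleton)
  then have "S - {i} \<noteq> {}" using card_gt_0_iff by blast
  then obtain j where "j \<in> S - {i}" by auto
  then show ?thesis using that i by auto
qed

lemma dir_left:
  assumes QP: "\<forall>i<l. is_povm d m (Q i)"
    and H: "\<forall>X \<in> ker_M_Q d l m Q. X \<noteq> 0\<^sub>m d d \<longrightarrow> num_pos_eigenvalues X \<ge> 2"
  shows "determines_pure_states d l m Q"
  unfolding determines_pure_states_def
proof (intro allI impI)
  fix \<sigma> \<rho> assume ps: "is_pure_state d \<sigma>" and st: "is_state d \<rho>" and eq: "M_Q l m Q \<sigma> = M_Q l m Q \<rho>"
  have hs: "hermitian d \<sigma>" and ps\<rho>: "psd d \<rho>" and hr: "hermitian d \<rho>" and rk: "vec_space.rank d \<sigma> = 1"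
    using ps st unfolding is_pure_state_def is_state_def psd_def by blast+
  have S: "\<sigma> \<in> carrier_mat d d" and R: "\<rho> \<in> carrier_mat d d" using hs hr herm_carr by auto
  show "\<rho> = \<sigma>"
  proof (rule ccontr)
    assume ne: "\<rho> \<noteq> \<sigma>"
    define Y where "Y = \<sigma> - \<rho>"
    have Yk: "Y \<in> ker_M_Q d l m Q" unfolding Y_def by (rule ker_minus[OF QP hs hr eq])
    have hY: "hermitian d Y" using Yk unfolding ker_M_Q_def by simp
    have Y: "Y \<in> carrier_mat d d" using hY herm_carr by auto
    have Yn: "Y \<noteq> 0\<^sub>m d d"
    proof
      assume "Y = 0\<^sub>m d d"
      then have Y0: "Y = 0\<^sub>m d d" .
      have "\<rho> = \<sigma>"
      proof (rule eq_matI)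
        fix a b assume "a < dim_row \<sigma>" "b < dim_col \<sigma>"
        then have ab: "a < d" "b < d" using S by auto
        have "Y $$ (a,b) = 0" using Y0 ab by simp
        then show "\<rho> $$ (a,b) = \<sigma> $$ (a,b)" using S R ab unfolding Y_def by simp
      qed (use S R in auto)
      with ne show False by simp
    qed
    from H Yk Yn have np: "num_pos_eigenvalues Y \<ge> 2" by auto
    obtain us lam where oe: "orthoeig d Y d us lam" using spectral[OF hY] by blast
    have "num_pos_eigenvalues Y = card {i. i < d \<and> lam i > 0}"
      by (rule num_pos_spec_aux[OF char_poly_spec[OF hY oe]])
    with np have c2: "2 \<le> card {i. i < d \<and> lam i > 0}" by simp
    obtain i j where "i \<in> {i. i < d \<and> lam i > 0}" "j \<in> {i. i < d \<and> lam i > 0}" "i \<noteq> j"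
      by (rule two_elems[OF c2])
    then have ij: "i < d" "lam i > 0" "j < d" "lam j > 0" "i \<noteq> j" by auto
    note uc = us_carr[OF hY oe] and ue = us_eig[OF hY oe] and uo = us_on[OF hY oe]
    obtain w g where wg: "\<And>x y. x < d \<Longrightarrow> y < d \<Longrightarrow> \<sigma> $$ (x,y) = w $ x * g y"
      using rank1_factor[OF S rk] by blast
    define \<alpha> where "\<alpha> = (\<Sum>y<d. g y * us i $ y)"
    define \<beta> where "\<beta> = (\<Sum>y<d. g y * us j $ y)"
    define a where "a = (if \<alpha> = 0 \<and> \<beta> = 0 then 1 else \<beta>)"
    define b where "b = (if \<alpha> = 0 \<and> \<beta> = 0 then 0 else - \<alpha>)"
    have ab0: "a * \<alpha> + b * \<beta> = 0" unfolding a_def b_def by (auto simp: algebra_simps)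
    have abn: "a \<noteq> 0 \<or> b \<noteq> 0" unfolding a_def b_def by auto
    define v where "v = a \<cdot>\<^sub>v us i + b \<cdot>\<^sub>v us j"
    have v: "v \<in> carrier_vec d" unfolding v_def using uc ij by auto
    have vy: "v $ y = a * us i $ y + b * us j $ y" if "y < d" for y
      unfolding v_def using that uc[OF ij(1)] uc[OF ij(3)] by simp
    have sv: "\<sigma> *\<^sub>v v = 0\<^sub>v d"
    proof (rule eq_vecI)
      fix x assume "x < dim_vec (0\<^sub>v d :: complex vec)"
      then have x: "x < d" by simp
      have "(\<sigma> *\<^sub>v v) $ x = (\<Sum>y<d. w $ x * g y * v $ y)" using mv_index[OF S v x] wg x by simp
      also have "\<dots> = w $ x * (a * \<alpha> + b * \<beta>)"
        unfolding \<alpha>_def \<beta>_def by (simp add: vy sum_distrib_left sum.distrib algebra_simps)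
      finally show "(\<sigma> *\<^sub>v v) $ x = 0\<^sub>v d $ x" using ab0 x by simp
    qed (use S in simp)
    have Yv: "Y *\<^sub>v v = \<sigma> *\<^sub>v v - \<rho> *\<^sub>v v" unfolding Y_def by (rule minus_mult_distrib_mat_vec[OF S R v])
    have ip1: "ip d v (Y *\<^sub>v v) = - ip d v (\<rho> *\<^sub>v v)"
    proof -
      have "ip d v (Y *\<^sub>v v) = ip d v (\<sigma> *\<^sub>v v) - ip d v (\<rho> *\<^sub>v v)"
        unfolding Yv by (rule ip_minus2) (use S R v in auto)
      moreover have "ip d v (\<sigma> *\<^sub>v v) = 0" unfolding sv by (simp add: ip_def)
      ultimately show ?thesis by simp
    qed
    have "0 \<le> Re (ip d v (\<rho> *\<^sub>v v))" using ps\<rho> v unfolding psd_ip by auto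
    then have le: "Re (ip d v (Y *\<^sub>v v)) \<le> 0" using ip1 by simp
    have Yv2: "Y *\<^sub>v v = (a * complex_of_real (lam i)) \<cdot>\<^sub>v us i + (b * complex_of_real (lam j)) \<cdot>\<^sub>v us j"
    proof -
      have "Y *\<^sub>v v = Y *\<^sub>v (a \<cdot>\<^sub>v us i) + Y *\<^sub>v (b \<cdot>\<^sub>v us j)"
        unfolding v_def by (rule mult_add_distrib_mat_vec[OF Y]) (use uc ij in auto)
      also have "\<dots> = a \<cdot>\<^sub>v (Y *\<^sub>v us i) + b \<cdot>\<^sub>v (Y *\<^sub>v us j)"
        using mult_mat_vec[OF Y uc[OF ij(1)]] mult_mat_vec[OF Y uc[OF ij(3)]] by simp
      finally show ?thesis using ue ij by (simp add: smult_smult_assoc)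
    qed
    have ip2: "ip d v (Y *\<^sub>v v) = cnj a * a * complex_of_real (lam i) + cnj b * b * complex_of_real (lam j)"
    proof -
      have ci: "us i \<in> carrier_vec d" and cj: "us j \<in> carrier_vec d" using uc ij by auto
      have "ip d v (Y *\<^sub>v v) = cnj a * ip d (us i) (Y *\<^sub>v v) + cnj b * ip d (us j) (Y *\<^sub>v v)"
        unfolding v_def using ci cj by (simp add: ip_add1 ip_smult1)
      also have "ip d (us i) (Y *\<^sub>v v) = a * complex_of_real (lam i)"
        unfolding Yv2 using ci cj uo ij by (simp add: ip_add2 ip_smult2)
      also have "ip d (us j) (Y *\<^sub>v v) = b * complex_of_real (lam j)"
        unfolding Yv2 using ci cj uo ij by (simp add: ip_add2 ip_smult2)
      finally show ?thesis by (simp add: mult.assoc)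
    qed
    have na: "cnj a * a = complex_of_real ((cmod a)^2)" using complex_norm_square[of a] by (simp add: mult.commute)
    have nb: "cnj b * b = complex_of_real ((cmod b)^2)" using complex_norm_square[of b] by (simp add: mult.commute)
    have "ip d v (Y *\<^sub>v v) = complex_of_real ((cmod a)^2 * lam i + (cmod b)^2 * lam j)"
      unfolding ip2 na nb by simp
    then have "Re (ip d v (Y *\<^sub>v v)) = (cmod a)^2 * lam i + (cmod b)^2 * lam j" by simp
    moreover have "(cmod a)^2 * lam i + (cmod b)^2 * lam j > 0"
    proof -
      have "(cmod a)^2 * lam i \<ge> 0" "(cmod b)^2 * lam j \<ge> 0" using ij by auto
      moreover have "(cmod a)^2 * lam i > 0 \<or> (cmod b)^2 * lam j > 0" using abn ij by auto
      ultimately show ?thesis by linarith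
    qed
    ultimately show False using le by simp
  qed
qed


lemma dir_right:
  assumes l1: "l \<ge> 1" and QP: "\<forall>i<l. is_povm d m (Q i)" and D: "determines_pure_states d l m Q"
  shows "\<forall>X \<in> ker_M_Q d l m Q. X \<noteq> 0\<^sub>m d d \<longrightarrow> num_pos_eigenvalues X \<ge> 2"
proof (intro ballI impI)
  fix X assume Xk: "X \<in> ker_M_Q d l m Q" and Xn: "X \<noteq> 0\<^sub>m d d"
  have hX: "hermitian d X" and MX: "M_Q l m Q X = 0\<^sub>m l m" using Xk unfolding ker_M_Q_def by auto
  have Xc: "X \<in> carrier_mat d d" by (rule herm_carr[OF hX])
  obtain us lam where oe: "orthoeig d X d us lam" using spectral[OF hX] by blast
  note uc = us_carr[OF hX oe] and ue = us_eig[OF hX oe] and uo = us_on[OF hX oe]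
  have np: "num_pos_eigenvalues X = card {i. i < d \<and> lam i > 0}"
    by (rule num_pos_spec_aux[OF char_poly_spec[OF hX oe]])
  show "num_pos_eigenvalues X \<ge> 2"
  proof (rule ccontr)
    assume "\<not> ?thesis"
    then have c1: "card {i. i < d \<and> lam i > 0} \<le> 1" using np by simp
    have P0: "is_povm d m (Q 0)" using QP l1 by auto
    have Cj: "\<And>j. j < m \<Longrightarrow> Q 0 j \<in> carrier_mat d d" using povm_carr[OF P0] by auto
    have Psum: "\<And>a b. a < d \<Longrightarrow> b < d \<Longrightarrow> (\<Sum>j<m. Q 0 j $$ (a, b)) = (if a = b then 1 else 0)"
      using P0 unfolding is_povm_def by simp
    have trsum: "(\<Sum>j<m. mtrace (X * Q 0 j)) = mtrace X"
    proof -
      have "(\<Sum>j<m. mtrace (X * Q 0 j)) = (\<Sum>j<m. \<Sum>a<d. \<Sum>c<d. X$$(a,c) * Q 0 j $$ (c,a))"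
        by (rule sum.cong[OF refl]) (simp add: mtrace_mult[OF Xc Cj])
      also have "\<dots> = (\<Sum>a<d. \<Sum>c<d. \<Sum>j<m. X$$(a,c) * Q 0 j $$ (c,a))"
        by (rule sum3_swap[symmetric])
      also have "\<dots> = (\<Sum>a<d. \<Sum>c<d. if c = a then X$$(a,c) else 0)"
      proof (intro sum.cong refl)
        fix a c assume a: "a \<in> {..<d}" and c: "c \<in> {..<d}"
        have "(\<Sum>j<m. X$$(a,c) * Q 0 j $$ (c,a)) = X$$(a,c) * (\<Sum>j<m. Q 0 j $$ (c,a))"
          by (simp add: sum_distrib_left)
        also have "\<dots> = (if c = a then X$$(a,c) else 0)" using Psum[of c a] a c by simp
        finally show "(\<Sum>j<m. X$$(a,c) * Q 0 j $$ (c,a)) = (if c = a then X$$(a,c) else 0)" .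
      qed
      also have "\<dots> = mtrace X" unfolding mtrace_def using Xc by simp
      finally show ?thesis .
    qed
    have Re0: "Re (mtrace (X * Q 0 j)) = 0" if j: "j < m" for j
    proof -
      have "M_Q l m Q X $$ (0, j) = 0\<^sub>m l m $$ (0, j)" using MX by simp
      then show ?thesis using j l1 by (simp add: M_Q_def)
    qed
    have "Re (mtrace X) = 0"
      unfolding trsum[symmetric] Re_sum using Re0 by simp
    then have sl: "(\<Sum>i<d. lam i) = 0" using trace_spec[OF hX oe] by simp
    have trX: "mtrace X = 0" using trace_spec[OF hX oe] sl by simp
    have "\<exists>p<d. lam p > 0"
    proof (rule ccontr)
      assume "\<not> ?thesis"
      then have nonpos: "\<forall>i\<in>{..<d}. 0 \<le> - lam i" by auto
      have "(\<Sum>i<d. - lam i) = 0" using sl by (simp add: sum_negf)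
      then have "\<forall>i\<in>{..<d}. - lam i = 0" using sum_nonneg_eq_0_iff[of "{..<d}" "\<lambda>i. - lam i"] nonpos by simp
      then have "X = 0\<^sub>m d d" by (intro zero_spec[OF hX oe]) auto
      with Xn show False by simp
    qed
    then obtain p where p: "p < d" "lam p > 0" by blast
    have uniq: "i = p" if i: "i < d" "lam i > 0" for i
    proof (rule ccontr)
      assume ne: "i \<noteq> p"
      have "{i,p} \<subseteq> {i. i < d \<and> lam i > 0}" using p i by auto
      then have "card {i,p} \<le> card {i. i < d \<and> lam i > 0}" by (rule card_mono[rotated]) auto
      then show False using c1 ne by simp
    qed
    define L where "L = lam p"
    define \<psi> where "\<psi> = us p"
    have psi: "\<psi> \<in> carrier_vec d" "ip d \<psi> \<psi> = 1" unfolding \<psi>_def using uc uo p by auto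
    have L: "L > 0" unfolding L_def using p by simp
    define \<sigma> where "\<sigma> = mat d d (\<lambda>(a,b). \<psi> $ a * cnj (\<psi> $ b))"
    define c where "c = complex_of_real (1 / L)"
    define \<rho> where "\<rho> = \<sigma> - c \<cdot>\<^sub>m X"
    have S: "\<sigma> \<in> carrier_mat d d" by (simp add: \<sigma>_def)
    have cX: "c \<cdot>\<^sub>m X \<in> carrier_mat d d" using Xc by simp
    have R: "\<rho> \<in> carrier_mat d d" unfolding \<rho>_def using S cX unfolding carrier_mat_def by simp
    have cc: "cnj c = c" unfolding c_def by simp
    have \<sigma>v: "\<sigma> *\<^sub>v v = ip d \<psi> v \<cdot>\<^sub>v \<psi>" if v: "v \<in> carrier_vec d" for v
    proof (rule eq_vecI)
      fix a assume "a < dim_vec (ip d \<psi> v \<cdot>\<^sub>v \<psi>)"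
      then have a: "a < d" using psi by simp
      have "(\<sigma> *\<^sub>v v) $ a = (\<Sum>b<d. \<psi> $ a * (cnj (\<psi> $ b) * v $ b))"
        using mv_index[OF S v a] a by (simp add: \<sigma>_def mult.assoc)
      also have "\<dots> = \<psi> $ a * ip d \<psi> v" by (simp add: ip_def sum_distrib_left)
      finally show "(\<sigma> *\<^sub>v v) $ a = (ip d \<psi> v \<cdot>\<^sub>v \<psi>) $ a" using a psi by (simp add: mult.commute)
    qed (use S psi in simp)
    have q\<sigma>: "ip d v (\<sigma> *\<^sub>v v) = complex_of_real ((cmod (ip d \<psi> v))^2)" if v: "v \<in> carrier_vec d" for v
    proof -
      have "ip d v (\<sigma> *\<^sub>v v) = ip d \<psi> v * ip d v \<psi>" unfolding \<sigma>v[OF v] using psi by (simp add: ip_smult2)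
      also have "\<dots> = ip d \<psi> v * cnj (ip d \<psi> v)" using ip_cnj[of d v \<psi>] by simp
      finally show ?thesis unfolding complex_norm_square .
    qed
    have h\<sigma>: "hermitian d \<sigma>" by (rule hermI[OF S]) (simp add: \<sigma>_def)
    have ps\<sigma>: "psd d \<sigma>" unfolding psd_ip using h\<sigma> q\<sigma> by simp
    have tr\<sigma>: "mtrace \<sigma> = 1"
    proof -
      have "mtrace \<sigma> = (\<Sum>a<d. \<psi> $ a * cnj (\<psi> $ a))" unfolding mtrace_def by (simp add: \<sigma>_def)
      also have "\<dots> = ip d \<psi> \<psi>" by (simp add: ip_def mult.commute)
      finally show ?thesis using psi by simp
    qed
    have rk: "vec_space.rank d \<sigma> = 1" unfolding \<sigma>_def by (rule rank_outer[OF psi])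
    have pure: "is_pure_state d \<sigma>" unfolding is_pure_state_def is_state_def using ps\<sigma> tr\<sigma> rk by simp
    have \<rho>e: "\<rho> $$ (a,b) = \<sigma> $$ (a,b) - c * X $$ (a,b)" if "a < d" "b < d" for a b
      unfolding \<rho>_def using that S Xc by simp
    have h\<rho>: "hermitian d \<rho>"
    proof (rule hermI[OF R])
      fix a b assume ab: "a < d" "b < d"
      show "\<rho> $$ (a,b) = cnj (\<rho> $$ (b,a))"
        unfolding \<rho>e[OF ab] \<rho>e[OF ab(2,1)] using herm_cnj[OF hX ab] cc by (simp add: \<sigma>_def ab)
    qed
    have q\<rho>: "Re (ip d v (\<rho> *\<^sub>v v)) \<ge> 0" if v: "v \<in> carrier_vec d" for v
    proof -
      have "\<rho> *\<^sub>v v = \<sigma> *\<^sub>v v - (c \<cdot>\<^sub>v (X *\<^sub>v v))"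
        unfolding \<rho>_def using minus_mult_distrib_mat_vec[OF S cX v] smult_mat_vec[OF Xc v] by simp
      then have "ip d v (\<rho> *\<^sub>v v) = ip d v (\<sigma> *\<^sub>v v) - c * ip d v (X *\<^sub>v v)"
        using S Xc v by (simp add: ip_minus2 ip_smult2)
      also have "\<dots> = complex_of_real ((cmod (ip d \<psi> v))^2 - (1/L) * (\<Sum>i<d. lam i * (cmod (ip d (us i) v))^2))"
        unfolding q\<sigma>[OF v] quad_form[OF hX oe v] c_def by simp
      finally have eq: "Re (ip d v (\<rho> *\<^sub>v v)) = (cmod (ip d \<psi> v))^2 - (1/L) * (\<Sum>i<d. lam i * (cmod (ip d (us i) v))^2)"
        by simp
      have "(\<Sum>i<d. lam i * (cmod (ip d (us i) v))^2) = lam p * (cmod (ip d (us p) v))^2 + (\<Sum>i\<in>{..<d} - {p}. lam i * (cmod (ip d (us i) v))^2)"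
        using p by (simp add: sum.remove)
      also have "(\<Sum>i\<in>{..<d} - {p}. lam i * (cmod (ip d (us i) v))^2) \<le> 0"
      proof (rule sum_nonpos)
        fix i assume i: "i \<in> {..<d} - {p}"
        then have "lam i \<le> 0" using uniq[of i] by force
        then show "lam i * (cmod (ip d (us i) v))^2 \<le> 0" by (simp add: mult_nonpos_nonneg)
      qed
      finally have "(\<Sum>i<d. lam i * (cmod (ip d (us i) v))^2) \<le> L * (cmod (ip d \<psi> v))^2"
        unfolding L_def \<psi>_def by simp
      then have "(1/L) * (\<Sum>i<d. lam i * (cmod (ip d (us i) v))^2) \<le> (cmod (ip d \<psi> v))^2"
        using L by (simp add: field_simps)
      then show ?thesis using eq by simp
    qed
    have ps\<rho>: "psd d \<rho>" unfolding psd_ip using h\<rho> q\<rho> by simp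
    have tr\<rho>: "mtrace \<rho> = 1"
    proof -
      have "mtrace \<rho> = (\<Sum>a<d. \<sigma> $$ (a,a) - c * X $$ (a,a))"
        unfolding mtrace_def using R by (intro sum.cong) (auto simp: \<rho>e)
      also have "\<dots> = mtrace \<sigma> - c * mtrace X"
        unfolding mtrace_def using S Xc by (simp add: sum_subtractf sum_distrib_left)
      finally show ?thesis using tr\<sigma> trX by simp
    qed
    have st: "is_state d \<rho>" unfolding is_state_def using ps\<rho> tr\<rho> by simp
    have Meq: "M_Q l m Q \<sigma> = M_Q l m Q \<rho>"
    proof (rule eq_matI)
      fix i j assume "i < dim_row (M_Q l m Q \<rho>)" "j < dim_col (M_Q l m Q \<rho>)"
      then have ij: "i < l" "j < m" by (auto simp: M_Q_def)
      have C: "Q i j \<in> carrier_mat d d" using QP ij povm_carr by auto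
      have "M_Q l m Q X $$ (i,j) = 0\<^sub>m l m $$ (i,j)" using MX by simp
      then have z: "Re (mtrace (X * Q i j)) = 0" using ij by (simp add: M_Q_def)
      have "mtrace (\<rho> * Q i j) = mtrace (\<sigma> * Q i j) - c * mtrace (X * Q i j)"
        unfolding \<rho>_def by (rule mtrace_lin[OF S Xc C])
      then have "Re (mtrace (\<rho> * Q i j)) = Re (mtrace (\<sigma> * Q i j))"
        using z unfolding c_def by simp
      then show "M_Q l m Q \<sigma> $$ (i,j) = M_Q l m Q \<rho> $$ (i,j)" using ij by (simp add: M_Q_def)
    qed (auto simp: M_Q_def)
    have "\<rho> = \<sigma>" using D pure st Meq unfolding determines_pure_states_def by blast
    moreover have "\<rho> \<noteq> \<sigma>"
    proof
      assume eq: "\<rho> = \<sigma>"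
      have "X = 0\<^sub>m d d"
      proof (rule eq_matI)
        fix a b assume "a < dim_row (0\<^sub>m d d :: complex mat)" "b < dim_col (0\<^sub>m d d :: complex mat)"
        then have ab: "a < d" "b < d" by auto
        have "c * X $$ (a,b) = 0" using \<rho>e[OF ab] eq by simp
        moreover have "c \<noteq> 0" unfolding c_def using L by simp
        ultimately show "X $$ (a,b) = 0\<^sub>m d d $$ (a,b)" using ab by simp
      qed (use Xc in auto)
      with Xn show False by simp
    qed
    ultimately show False by simp
  qed
qed

theorem proposition1:
  fixes d l m :: nat and Q :: "nat \<Rightarrow> nat \<Rightarrow> complex mat"
  assumes "d \<ge> 1" and "l \<ge> 1" and "m \<ge> 1"
    and "\<forall>i<l. is_povm d m (Q i)"
  shows "determines_pure_states d l m Q \<longleftrightarrow>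
    (\<forall>X \<in> ker_M_Q d l m Q. X \<noteq> 0\<^sub>m d d \<longrightarrow> num_pos_eigenvalues X \<ge> 2)"
proof
  assume "determines_pure_states d l m Q"
  then show "\<forall>X \<in> ker_M_Q d l m Q. X \<noteq> 0\<^sub>m d d \<longrightarrow> num_pos_eigenvalues X \<ge> 2"
    by (rule dir_right[OF assms(2,4)])
next
  assume "\<forall>X \<in> ker_M_Q d l m Q. X \<noteq> 0\<^sub>m d d \<longrightarrow> num_pos_eigenvalues X \<ge> 2"
  then show "determines_pure_states d l m Q" by (rule dir_left[OF assms(4)])
qed

end
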